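(* Let $G$ be a finite, connected, pointed, edge-ordered graph with distinguished vertex $v_0$. For any vertices $u,v,w$ with $u\prec_D v\prec_D w$, if $u\to w$, then there exists a vertex $v'$ with $u\preceq_D v'\prec_D v$ and $v'\to v$.
   Context: A (directed) graph is $(V,\to)$ with $\to\subseteq V\times V$; $N(u)$ is the set of outgoing edges of $u$. A pointed graph has a distinguished vertex $v_0$; connected means every vertex is reachable by a path from $v_0$. A path is a finite sequence $v_1\to\cdots\to v_n$ of vertices joined by edges; proper if no vertex repeats; co-initial paths share their source; $\pi\sqsubset\sigma$ means $\pi$ is a proper prefix of $\sigma$. A finite edge-ordered graph is a finite graph with a strict linear order $\triangleleft$ on each neighborhood. Lexicographic path order on co-initial paths: if $\pi\sqsubset\sigma$ then $\pi\prec\sigma$ (symmetrically); otherwise, with $\zeta$ the longest common prefix, $u$ its target and $v_1,v_2$ the next vertices, $\pi\prec\sigma$ iff $u\to v_1\triangleleft u\to v_2$. $\min(u\rightsquigarrow v)$ is the $\prec$-least proper path from $u$ to $v$. Define $v\prec_D w$ iff $\min(v_0\rightsquigarrow v)\prec\min(v_0\rightsquigarrow w)$, and $v\preceq_D w$ iff $v\prec_D w$ or $v=w$. *)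

theory Defs
  imports Main
begin

text \<open>An edge order is given by ord :: 'v => 'v => 'v => bool, where
  ord u a b means that edge u->a is strictly below edge u->b in the order on N(u).\<close>

definition nbhd :: "('v \<times> 'v) set \<Rightarrow> 'v \<Rightarrow> 'v set" where
  "nbhd E u = {v. (u, v) \<in> E}"

definition finite_graph :: "'v set \<Rightarrow> ('v \<times> 'v) set \<Rightarrow> bool" where
  "finite_graph V E \<longleftrightarrow> finite V \<and> E \<subseteq> V \<times> V"

definition edge_order :: "('v \<times> 'v) set \<Rightarrow> ('v \<Rightarrow> 'v \<Rightarrow> 'v \<Rightarrow> bool) \<Rightarrow> bool" where
  "edge_order E ord \<longleftrightarrow> (\<forall>u.
      (\<forall>a b. ord u a b \<longrightarrow> a \<in> nbhd E u \<and> b \<in> nbhd E u)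
    \<and> (\<forall>a. \<not> ord u a a)
    \<and> (\<forall>a b c. ord u a b \<longrightarrow> ord u b c \<longrightarrow> ord u a c)
    \<and> (\<forall>a\<in>nbhd E u. \<forall>b\<in>nbhd E u. a \<noteq> b \<longrightarrow> ord u a b \<or> ord u b a))"

definition is_path :: "('v \<times> 'v) set \<Rightarrow> 'v list \<Rightarrow> bool" where
  "is_path E xs \<longleftrightarrow> xs \<noteq> [] \<and> (\<forall>i. Suc i < length xs \<longrightarrow> (xs ! i, xs ! Suc i) \<in> E)"

definition proper_path_from_to :: "('v \<times> 'v) set \<Rightarrow> 'v \<Rightarrow> 'v \<Rightarrow> 'v list \<Rightarrow> bool" where
  "proper_path_from_to E u v xs \<longleftrightarrow> is_path E xs \<and> distinct xs \<and> hd xs = u \<and> last xs = v"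

definition connected_pointed :: "'v set \<Rightarrow> ('v \<times> 'v) set \<Rightarrow> 'v \<Rightarrow> bool" where
  "connected_pointed V E v0 \<longleftrightarrow> v0 \<in> V \<and>
     (\<forall>v\<in>V. \<exists>xs. is_path E xs \<and> hd xs = v0 \<and> last xs = v)"

definition path_less :: "('v \<Rightarrow> 'v \<Rightarrow> 'v \<Rightarrow> bool) \<Rightarrow> 'v list \<Rightarrow> 'v list \<Rightarrow> bool" where
  "path_less ord p s \<longleftrightarrow>
     (\<exists>r. r \<noteq> [] \<and> s = p @ r) \<or>
     (\<exists>z v1 v2 r1 r2. z \<noteq> [] \<and> p = z @ v1 # r1 \<and> s = z @ v2 # r2 \<and> v1 \<noteq> v2
        \<and> ord (last z) v1 v2)"

definition min_path :: "('v \<times> 'v) set \<Rightarrow> ('v \<Rightarrow> 'v \<Rightarrow> 'v \<Rightarrow> bool) \<Rightarrow> 'v \<Rightarrow> 'v \<Rightarrow> 'v list" where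
  "min_path E ord u v = (THE p. proper_path_from_to E u v p \<and>
      (\<forall>s. proper_path_from_to E u v s \<and> s \<noteq> p \<longrightarrow> path_less ord p s))"

definition prec_D :: "('v \<times> 'v) set \<Rightarrow> ('v \<Rightarrow> 'v \<Rightarrow> 'v \<Rightarrow> bool) \<Rightarrow> 'v \<Rightarrow> 'v \<Rightarrow> 'v \<Rightarrow> bool" where
  "prec_D E ord v0 v w \<longleftrightarrow> path_less ord (min_path E ord v0 v) (min_path E ord v0 w)"

definition preceq_D :: "('v \<times> 'v) set \<Rightarrow> ('v \<Rightarrow> 'v \<Rightarrow> 'v \<Rightarrow> bool) \<Rightarrow> 'v \<Rightarrow> 'v \<Rightarrow> 'v \<Rightarrow> bool" where
  "preceq_D E ord v0 v w \<longleftrightarrow> prec_D E ord v0 v w \<or> v = w"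

end

theory Submission
  imports Defs "HOL-Library.Sublist"
begin


definition dv :: "('v \<Rightarrow> 'v \<Rightarrow> 'v \<Rightarrow> bool) \<Rightarrow> 'v list \<Rightarrow> 'v list \<Rightarrow> bool" where
  "dv ord p s \<longleftrightarrow> (\<exists>z v1 v2 r1 r2. z \<noteq> [] \<and> p = z @ v1 # r1 \<and> s = z @ v2 # r2 \<and> v1 \<noteq> v2
        \<and> ord (last z) v1 v2)"

lemma pl_iff: "path_less ord p s \<longleftrightarrow> strict_prefix p s \<or> dv ord p s"
  unfolding path_less_def dv_def strict_prefix_def prefix_def by auto

lemma eo_irr: "edge_order E ord \<Longrightarrow> \<not> ord u a a"
  unfolding edge_order_def by blast
lemma eo_trans: "edge_order E ord \<Longrightarrow> ord u a b \<Longrightarrow> ord u b c \<Longrightarrow> ord u a c"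
  unfolding edge_order_def by blast
lemma eo_total: "edge_order E ord \<Longrightarrow> (u,a)\<in>E \<Longrightarrow> (u,b)\<in>E \<Longrightarrow> a\<noteq>b \<Longrightarrow> ord u a b \<or> ord u b a"
  unfolding edge_order_def nbhd_def by blast

lemma dv_irr: "\<not> dv ord p p"
  unfolding dv_def by auto
lemma dv_app_l: "dv ord p s \<Longrightarrow> dv ord (p@x) s"
  unfolding dv_def by fastforce
lemma dv_app_r: "dv ord p s \<Longrightarrow> dv ord p (s@x)"
  unfolding dv_def by fastforce
lemma dv_not_prefix: "dv ord p s \<Longrightarrow> \<not> prefix p s \<and> \<not> prefix s p"
  unfolding dv_def prefix_def by auto
lemma dv_prefix: "dv ord p s \<Longrightarrow> prefix p' p \<Longrightarrow> p' \<noteq> [] \<Longrightarrow> dv ord p' s \<or> prefix p' s"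
proof -
  assume "dv ord p s" "prefix p' p" "p' \<noteq> []"
  then obtain z v1 v2 r1 r2 where h: "z \<noteq> []" "p = z @ v1 # r1" "s = z @ v2 # r2" "v1 \<noteq> v2"
        "ord (last z) v1 v2" unfolding dv_def by blast
  from \<open>prefix p' p\<close> h(2) have "prefix p' z \<or> (\<exists>us. p' = z @ us \<and> prefix us (v1#r1))"
    by (simp add: prefix_append)
  then show ?thesis
  proof
    assume "prefix p' z" then have "prefix p' s" using h(3) by (simp add: prefix_append)
    then show ?thesis by simp
  next
    assume "\<exists>us. p' = z @ us \<and> prefix us (v1#r1)"
    then obtain us where us: "p' = z @ us" "prefix us (v1#r1)" by blast
    show ?thesis
    proof (cases "us = []")
      case True then show ?thesis using us h(3) by (simp add: prefix_def)
    next
      case False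
      then obtain zs where "us = v1 # zs" using us(2) by (auto simp: prefix_Cons)
      then show ?thesis unfolding dv_def using h us by blast
    qed
  qed
qed

lemma dv_trans: assumes eo: "edge_order E ord" and a: "dv ord p s" and b: "dv ord s t"
  shows "dv ord p t"
proof -
  obtain z1 a1 b1 r1 r2 where h1: "z1 \<noteq> []" "p = z1 @ a1 # r1" "s = z1 @ b1 # r2" "a1 \<noteq> b1"
        "ord (last z1) a1 b1" using a unfolding dv_def by blast
  obtain z2 c d r3 r4 where h2: "z2 \<noteq> []" "s = z2 @ c # r3" "t = z2 @ d # r4" "c \<noteq> d"
        "ord (last z2) c d" using b unfolding dv_def by blast
  have "z1 @ b1 # r2 = z2 @ c # r3" using h1 h2 by simp
  then have "(z1 = z2 \<and> b1 = c) \<or> (\<exists>m. z2 = z1 @ b1 # m) \<or> (\<exists>m. z1 = z2 @ c # m)"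
    by (auto simp: append_eq_append_conv2 Cons_eq_append_conv append_eq_Cons_conv)
  then show ?thesis
  proof (elim disjE exE conjE)
    assume "z1 = z2" "b1 = c"
    then have "ord (last z1) a1 d" using eo_trans[OF eo] h1 h2 by metis
    moreover then have "a1 \<noteq> d" using eo_irr[OF eo] by metis
    ultimately show ?thesis unfolding dv_def using h1 h2 \<open>z1 = z2\<close> by blast
  next
    fix m assume "z2 = z1 @ b1 # m"
    then have "t = z1 @ b1 # (m @ d # r4)" using h2 by simp
    then show ?thesis unfolding dv_def using h1 by blast
  next
    fix m assume "z1 = z2 @ c # m"
    then have "p = z2 @ c # (m @ a1 # r1)" using h1 by simp
    then show ?thesis unfolding dv_def using h2 by blast
  qed
qed

lemma pl_irr: "\<not> path_less ord p p"
  by (simp add: pl_iff dv_irr)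

lemma pl_trans: assumes eo: "edge_order E ord" and a: "path_less ord p s" and b: "path_less ord s t"
  shows "path_less ord p t"
proof -
  consider "strict_prefix p s" "strict_prefix s t" | "strict_prefix p s" "dv ord s t"
    | "dv ord p s" "strict_prefix s t" | "dv ord p s" "dv ord s t"
    using a b by (auto simp: pl_iff)
  then show ?thesis
  proof cases
    case 1 then show ?thesis by (auto simp: pl_iff strict_prefix_def prefix_def)
  next
    case 2
    show ?thesis
    proof (cases "p = []")
      case True then show ?thesis using 2 unfolding dv_def by (auto simp: pl_iff strict_prefix_def)
    next
      case False
      from dv_prefix[OF 2(2) _ False] 2(1) have "dv ord p t \<or> prefix p t" by auto
      moreover have "p \<noteq> t" using 2 dv_not_prefix unfolding strict_prefix_def by metis
      ultimately show ?thesis by (auto simp: pl_iff)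
    qed
  next
    case 3 then show ?thesis by (auto simp: pl_iff strict_prefix_def prefix_def dv_app_r)
  next
    case 4 then show ?thesis using dv_trans[OF eo] by (auto simp: pl_iff)
  qed
qed

lemma pl_asym: "edge_order E ord \<Longrightarrow> path_less ord p s \<Longrightarrow> path_less ord s p \<Longrightarrow> False"
  using pl_trans pl_irr by metis


lemma is_path_single[simp]: "is_path E [x]"
  unfolding is_path_def by simp

lemma is_path_Cons2[simp]: "is_path E (x#y#xs) \<longleftrightarrow> (x,y)\<in>E \<and> is_path E (y#xs)"
  unfolding is_path_def
  by (auto simp: nth_Cons split: nat.splits)

lemma is_path_append: "xs \<noteq> [] \<Longrightarrow> ys \<noteq> [] \<Longrightarrow>
   is_path E (xs@ys) \<longleftrightarrow> is_path E xs \<and> is_path E ys \<and> (last xs, hd ys) \<in> E"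
proof (induction xs)
  case Nil then show ?case by simp
next
  case (Cons x xs)
  show ?case
  proof (cases xs)
    case Nil then show ?thesis using Cons by (cases ys) auto
  next
    case (Cons a l) then show ?thesis using Cons.IH Cons.prems by auto
  qed
qed

lemma is_path_edge: "is_path E (xs@y#ys) \<Longrightarrow> xs \<noteq> [] \<Longrightarrow> (last xs, y) \<in> E"
  using is_path_append[of xs "y#ys" E] by simp

lemma is_path_set: "is_path E p \<Longrightarrow> hd p \<in> V \<Longrightarrow> E \<subseteq> V \<times> V \<Longrightarrow> set p \<subseteq> V"
proof (induction p)
  case Nil then show ?case by simp
next
  case (Cons x xs) then show ?case by (cases xs) auto
qed

lemma make_proper: "is_path E xs \<Longrightarrow> \<exists>ys. is_path E ys \<and> distinct ys \<and> hd ys = hd xs \<and> last ys = last xs"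
proof (induction xs)
  case Nil then show ?case by (simp add: is_path_def)
next
  case (Cons x xs)
  show ?case
  proof (cases xs)
    case Nil then show ?thesis by (intro exI[of _ "[x]"]) simp
  next
    case (Cons a l)
    then have e: "(x, a) \<in> E" "is_path E xs" using Cons.prems by auto
    then obtain ys where ys: "is_path E ys" "distinct ys" "hd ys = a" "last ys = last xs"
      using Cons.IH Cons by auto
    have ne: "ys \<noteq> []" using ys(1) by (auto simp: is_path_def)
    show ?thesis
    proof (cases "x \<in> set ys")
      case False
      have "is_path E (x#ys)" using ys e ne by (cases ys) auto
      then show ?thesis using False ys ne Cons by (intro exI[of _ "x#ys"]) auto
    next
      case True
      then obtain A B where AB: "ys = A @ x # B" by (meson split_list)
      have "is_path E (x#B)"
      proof (cases "A = []")
        case True then show ?thesis using AB ys by simp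
      next
        case False then show ?thesis using is_path_append[of A "x#B" E] AB ys by simp
      qed
      then show ?thesis using AB ys Cons by (intro exI[of _ "x#B"]) auto
    qed
  qed
qed

lemma pl_total: assumes eo: "edge_order E ord" and "is_path E p" "is_path E s" "hd p = hd s" "p \<noteq> s"
  shows "path_less ord p s \<or> path_less ord s p"
proof -
  have ne: "p \<noteq> []" "s \<noteq> []" using assms by (auto simp: is_path_def)
  consider "prefix p s" | "prefix s p" | "p \<parallel> s" by (auto simp: parallel_def)
  then show ?thesis
  proof cases
    case 1 then show ?thesis using assms by (auto simp: pl_iff strict_prefix_def)
  next
    case 2 then show ?thesis using assms by (auto simp: pl_iff strict_prefix_def)
  next
    case 3
    then obtain as b bs c cs where h: "b \<noteq> c" "p = as @ b # bs" "s = as @ c # cs"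
      using parallel_decomp by blast
    have "as \<noteq> []" using h assms by auto
    then have "(last as, b) \<in> E" "(last as, c) \<in> E" using is_path_edge h assms by metis+
    then have "ord (last as) b c \<or> ord (last as) c b" using eo_total[OF eo] h by blast
    then show ?thesis unfolding pl_iff dv_def using h \<open>as \<noteq> []\<close> by blast
  qed
qed

lemma finite_min: "finite S \<Longrightarrow> S \<noteq> {} \<Longrightarrow> (\<forall>a\<in>S. \<forall>b\<in>S. \<forall>c\<in>S. R a b \<longrightarrow> R b c \<longrightarrow> R a c)
  \<Longrightarrow> (\<forall>a\<in>S. \<forall>b\<in>S. a \<noteq> b \<longrightarrow> R a b \<or> R b a) \<Longrightarrow> \<exists>m\<in>S. \<forall>s\<in>S. s \<noteq> m \<longrightarrow> R m s"
proof (induction S rule: finite_ne_induct)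
  case (singleton x) then show ?case by simp
next
  case (insert x F)
  have tr: "\<forall>a\<in>F. \<forall>b\<in>F. \<forall>c\<in>F. R a b \<longrightarrow> R b c \<longrightarrow> R a c" using insert.prems(1) by blast
  have to: "\<forall>a\<in>F. \<forall>b\<in>F. a \<noteq> b \<longrightarrow> R a b \<or> R b a" using insert.prems(2) by blast
  obtain m where m: "m \<in> F" "\<forall>s\<in>F. s \<noteq> m \<longrightarrow> R m s" using insert.IH[OF tr to] by blast
  have xm: "x \<noteq> m" using m insert.hyps by blast
  show ?case
  proof (cases "R x m")
    case True
    have "\<forall>s\<in>insert x F. s \<noteq> x \<longrightarrow> R x s"
    proof (intro ballI impI)
      fix s assume s: "s \<in> insert x F" "s \<noteq> x"
      then have sF: "s \<in> F" by blast
      show "R x s"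
      proof (cases "s = m")
        case True then show ?thesis using \<open>R x m\<close> by simp
      next
        case False
        then have "R m s" using m sF by blast
        then show ?thesis using insert.prems(1) \<open>R x m\<close> m(1) sF by blast
      qed
    qed
    then show ?thesis by blast
  next
    case False
    then have "R m x" using insert.prems(2) xm m(1) by blast
    then show ?thesis using m by blast
  qed
qed


lemma minP: assumes fg: "finite_graph V E" and eo: "edge_order E ord" and cp: "connected_pointed V E v0"
  and xV: "x \<in> V"
  shows "proper_path_from_to E v0 x (min_path E ord v0 x) \<and>
    (\<forall>s. proper_path_from_to E v0 x s \<longrightarrow> s = min_path E ord v0 x \<or> path_less ord (min_path E ord v0 x) s)"
proof -
  let ?S = "{p. proper_path_from_to E v0 x p}"
  have v0V: "v0 \<in> V" and EV: "E \<subseteq> V \<times> V" and fV: "finite V"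
    using cp fg unfolding connected_pointed_def finite_graph_def by auto
  have "?S \<subseteq> {xs. set xs \<subseteq> V \<and> length xs \<le> card V}"
  proof
    fix p assume "p \<in> ?S"
    then have p: "is_path E p" "distinct p" "hd p = v0" unfolding proper_path_from_to_def by auto
    then have "set p \<subseteq> V" using is_path_set[OF p(1) _ EV] v0V by simp
    moreover have "length p \<le> card V" using distinct_card[OF p(2)] card_mono[OF fV \<open>set p \<subseteq> V\<close>] by simp
    ultimately show "p \<in> {xs. set xs \<subseteq> V \<and> length xs \<le> card V}" by simp
  qed
  then have fin: "finite ?S" using finite_lists_length_le[OF fV] finite_subset by blast
  obtain q where "is_path E q" "hd q = v0" "last q = x" using cp xV unfolding connected_pointed_def by blast
  then obtain q' where "proper_path_from_to E v0 x q'" using make_proper unfolding proper_path_from_to_def by metis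
  then have ne: "?S \<noteq> {}" by blast
  have tr: "\<forall>a\<in>?S. \<forall>b\<in>?S. \<forall>c\<in>?S. path_less ord a b \<longrightarrow> path_less ord b c \<longrightarrow> path_less ord a c"
    using pl_trans[OF eo] by blast
  have to: "\<forall>a\<in>?S. \<forall>b\<in>?S. a \<noteq> b \<longrightarrow> path_less ord a b \<or> path_less ord b a"
    using pl_total[OF eo] unfolding proper_path_from_to_def by auto
  obtain m where m: "m \<in> ?S" "\<forall>s\<in>?S. s \<noteq> m \<longrightarrow> path_less ord m s"
    using finite_min[OF fin ne tr to] by blast
  have "min_path E ord v0 x = m"
    unfolding min_path_def
  proof (rule the_equality)
    show "proper_path_from_to E v0 x m \<and> (\<forall>s. proper_path_from_to E v0 x s \<and> s \<noteq> m \<longrightarrow> path_less ord m s)"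
      using m by blast
  next
    fix p assume p: "proper_path_from_to E v0 x p \<and> (\<forall>s. proper_path_from_to E v0 x s \<and> s \<noteq> p \<longrightarrow> path_less ord p s)"
    show "p = m"
    proof (rule ccontr)
      assume "p \<noteq> m"
      then have "path_less ord p m" "path_less ord m p" using p m by auto
      then show False using pl_asym[OF eo] by blast
    qed
  qed
  then show ?thesis using m by auto
qed


lemma is_path_prefix: "is_path E (xs@ys) \<Longrightarrow> xs \<noteq> [] \<Longrightarrow> is_path E xs"
  by (cases "ys = []") (auto simp: is_path_append)

lemma prefix_eq_last: "prefix T S \<Longrightarrow> distinct S \<Longrightarrow> T \<noteq> [] \<Longrightarrow> last T = last S \<Longrightarrow> T = S"
proof -
  assume a: "prefix T S" "distinct S" "T \<noteq> []" "last T = last S"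
  then obtain R where R: "S = T @ R" by (auto simp: prefix_def)
  show "T = S"
  proof (cases "R = []")
    case True then show ?thesis using R by simp
  next
    case False
    then have "last S = last R" "last R \<in> set R" using R by auto
    moreover have "last T \<in> set T" using a(3) by simp
    ultimately show ?thesis using a R by auto
  qed
qed

lemma hd_pre: "hd (A@[w]) = hd (A@w#B)"
  by (cases A) auto

lemma pp_prefix: assumes "proper_path_from_to E a b (C@x#D)"
  shows "proper_path_from_to E a x (C@[x])"
proof -
  have "is_path E ((C@[x])@D)" using assms unfolding proper_path_from_to_def by simp
  then have "is_path E (C@[x])" using is_path_prefix by blast
  then show ?thesis using assms hd_pre[of C x D] unfolding proper_path_from_to_def by auto
qed

theorem lemma10p2:
  fixes V :: "'v set" and E :: "('v \<times> 'v) set" and ord :: "'v \<Rightarrow> 'v \<Rightarrow> 'v \<Rightarrow> bool" and v0 :: 'v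
  assumes "finite_graph V E"
    and "edge_order E ord"
    and "connected_pointed V E v0"
    and "u \<in> V" and "v \<in> V" and "w \<in> V"
    and "prec_D E ord v0 u v" and "prec_D E ord v0 v w"
    and "(u, w) \<in> E"
  shows "\<exists>v'\<in>V. preceq_D E ord v0 u v' \<and> prec_D E ord v0 v' v \<and> (v', v) \<in> E"
proof -
  note fg = assms(1) and eo = assms(2) and cp = assms(3)
  define P where "P = min_path E ord v0"
  have mP1: "\<And>x. x \<in> V \<Longrightarrow> proper_path_from_to E v0 x (P x)"
    unfolding P_def using minP[OF fg eo cp] by blast
  have mP2: "\<And>x s. x \<in> V \<Longrightarrow> proper_path_from_to E v0 x s \<Longrightarrow> P x = s \<or> path_less ord (P x) s"
  proof -
    fix x s assume "x \<in> V" "proper_path_from_to E v0 x s"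
    then show "P x = s \<or> path_less ord (P x) s" unfolding P_def using minP[OF fg eo cp \<open>x \<in> V\<close>] by metis
  qed
  have v0V: "v0 \<in> V" and EV: "E \<subseteq> V \<times> V"
    using cp fg unfolding connected_pointed_def finite_graph_def by auto
  have ppne: "\<And>a b p. proper_path_from_to E a b p \<Longrightarrow> p \<noteq> []"
    unfolding proper_path_from_to_def is_path_def by auto
  have uv: "path_less ord (P u) (P v)" and vw: "path_less ord (P v) (P w)"
    using assms(7,8) unfolding prec_D_def P_def by auto
  have pu: "proper_path_from_to E v0 u (P u)" using mP1[OF assms(4)] .
  have pv: "proper_path_from_to E v0 v (P v)" using mP1[OF assms(5)] .
  have Pune: "P u \<noteq> []" using ppne pu by blast
  have tr: "\<And>a b c. path_less ord a b \<Longrightarrow> path_less ord b c \<Longrightarrow> path_less ord a c"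
    using pl_trans[OF eo] by blast
  have asy: "\<And>a b. path_less ord a b \<Longrightarrow> path_less ord b a \<Longrightarrow> False"
    using pl_asym[OF eo] by blast
  have wnot: "w \<notin> set (P u)"
  proof
    assume "w \<in> set (P u)"
    then obtain A B where AB: "P u = A @ w # B" by (meson split_list)
    have T: "proper_path_from_to E v0 w (A@[w])" using pp_prefix[of E v0 u A w B] pu AB by simp
    then have h1: "P w = A@[w] \<or> path_less ord (P w) (A@[w])" by (rule mP2[OF assms(6)])
    have h2: "A@[w] = P u \<or> path_less ord (A@[w]) (P u)"
    proof (cases "B = []")
      case True then show ?thesis using AB by simp
    next
      case False then show ?thesis using AB unfolding path_less_def by (intro disjI2 disjI1 exI[of _ B]) simp
    qed
    have "P w = P u \<or> path_less ord (P w) (P u)"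
      using h1 h2 tr[of "P w" "A@[w]" "P u"] by auto
    moreover have "path_less ord (P u) (P w)" using tr[OF uv vw] .
    ultimately show False using asy[of "P u" "P w"] pl_irr[of ord "P u"] by auto
  qed
  have T2: "proper_path_from_to E v0 w (P u @ [w])"
  proof -
    have "last (P u) = u" "hd (P u) = v0" "is_path E (P u)" "distinct (P u)"
      using pu unfolding proper_path_from_to_def by auto
    then show ?thesis using wnot Pune assms(9) unfolding proper_path_from_to_def
      by (auto simp: is_path_append)
  qed
  have "P w = P u @ [w] \<or> path_less ord (P w) (P u @ [w])" using mP2[OF assms(6) T2] .
  then have vT2: "path_less ord (P v) (P u @ [w])" using vw tr by metis
  have "strict_prefix (P u) (P v)"
  proof -
    have "strict_prefix (P u) (P v) \<or> dv ord (P u) (P v)" using uv pl_iff by metis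
    moreover have "\<not> dv ord (P u) (P v)"
    proof
      assume "dv ord (P u) (P v)"
      then have "path_less ord (P u @ [w]) (P v)" using dv_app_l pl_iff by metis
      then show False using vT2 asy by blast
    qed
    ultimately show ?thesis by blast
  qed
  then obtain r where r: "P v = P u @ r" "r \<noteq> []" by (auto simp: strict_prefix_def prefix_def)
  have lv: "last (P v) = v" and dPv: "distinct (P v)" and ipv: "is_path E (P v)" and hPv: "hd (P v) = v0"
    using pv unfolding proper_path_from_to_def by auto
  obtain r' where r': "r = r' @ [v]" using r lv by (metis append_butlast_last_id last_appendR)
  have setPv: "set (P v) \<subseteq> V" using is_path_set[OF ipv _ EV] hPv v0V by simp
  show ?thesis
  proof (cases "r' = []")
    case True
    then have "P v = P u @ v # []" using r r' by simp
    then have "(last (P u), v) \<in> E" using is_path_edge ipv Pune by metis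
    moreover have "last (P u) = u" using pu unfolding proper_path_from_to_def by auto
    ultimately show ?thesis using assms(4,7) unfolding preceq_D_def by auto
  next
    case False
    define y where "y = last r'"
    define Q where "Q = P u @ r'"
    have PvQ: "P v = Q @ v # []" using r r' Q_def by simp
    have pQ: "proper_path_from_to E v0 y Q"
      using pp_prefix[of E v0 v Q v "[]"] pv PvQ False unfolding y_def Q_def
      unfolding proper_path_from_to_def
      by (auto simp: is_path_prefix hd_append Pune)
    have Qne: "Q \<noteq> []" using Q_def Pune by simp
    have yv: "(y, v) \<in> E" using is_path_edge[of E Q v "[]"] ipv PvQ Qne Q_def y_def False by simp
    have yV: "y \<in> V" using setPv PvQ y_def Q_def False by auto
    have ynot: "y \<notin> set (P u)" using dPv r r' False y_def by auto
    have vnotQ: "v \<notin> set Q" using dPv PvQ by simp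
    have "path_less ord Q (P v)" using PvQ by (auto simp: path_less_def)
    moreover have "P y = Q \<or> path_less ord (P y) Q" using mP2[OF yV pQ] .
    ultimately have yvl: "path_less ord (P y) (P v)" using tr by metis
    have py: "proper_path_from_to E v0 y (P y)" using mP1[OF yV] .
    have lpy: "last (P y) = y" and ipy: "is_path E (P y)" and dpy: "distinct (P y)"
       and hpy: "hd (P y) = v0" and pyne: "P y \<noteq> []"
      using py ppne[OF py] unfolding proper_path_from_to_def by auto
    have "path_less ord (P u) (P y)"
    proof (rule ccontr)
      assume nl: "\<not> path_less ord (P u) (P y)"
      have "P u \<noteq> P y" using ynot lpy pyne by (metis last_in_set)
      moreover have "hd (P u) = hd (P y)" using pu hpy unfolding proper_path_from_to_def by simp
      ultimately have yu: "path_less ord (P y) (P u)"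
        using nl pl_total[OF eo] pu ipy unfolding proper_path_from_to_def by blast
      have "\<not> strict_prefix (P y) (P u)"
      proof
        assume "strict_prefix (P y) (P u)"
        then have "set (P y) \<subseteq> set (P u)" by (auto simp: strict_prefix_def prefix_def)
        then show False using ynot lpy pyne by (metis last_in_set subsetD)
      qed
      then have dyu: "dv ord (P y) (P u)" using yu pl_iff by metis
      then have dyv: "dv ord (P y) (P v)" using r dv_app_r by metis
      have "\<exists>T. proper_path_from_to E v0 v T \<and> dv ord T (P v)"
      proof (cases "v \<in> set (P y)")
        case False
        have "proper_path_from_to E v0 v (P y @ [v])"
          using False lpy ipy dpy hpy pyne yv unfolding proper_path_from_to_def
          by (auto simp: is_path_append)
        then show ?thesis using dyv dv_app_l by blast
      next
        case True
        then obtain C D where CD: "P y = C @ v # D" by (meson split_list)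
        have pT: "proper_path_from_to E v0 v (C@[v])" using pp_prefix py CD by metis
        have preT: "prefix (C@[v]) (P y)" using CD by (simp add: prefix_def)
        have "dv ord (C@[v]) (P v) \<or> prefix (C@[v]) (P v)" using dv_prefix[OF dyv preT] by simp
        moreover have "\<not> prefix (C@[v]) (P v)"
        proof
          assume "prefix (C@[v]) (P v)"
          then have "C@[v] = P v" using prefix_eq_last dPv lv by fastforce
          then have "prefix (P v) (P y)" using preT by simp
          then have "prefix (P u) (P y)" using r by (auto simp: prefix_def)
          then show False using dv_not_prefix[OF dyu] by blast
        qed
        ultimately show ?thesis using pT by blast
      qed
      then obtain T where T: "proper_path_from_to E v0 v T" "dv ord T (P v)" by blast
      have "P v = T \<or> path_less ord (P v) T" using mP2[OF assms(5) T(1)] .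
      moreover have "path_less ord T (P v)" using T(2) pl_iff by metis
      ultimately show False using dv_irr T(2) asy by metis
    qed
    then show ?thesis using yV yvl yv unfolding preceq_D_def prec_D_def P_def by blast
  qed
qed

end
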